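(* The matching policies FCFM, LCFM, every random policy (in particular every strict priority policy and the uniform policy U), and Match the Longest (ML) are sub-additive: for all $z',z''\in\mathcal V^*$ and all $\varsigma',\varsigma''\in\mathcal S^*$ whose letters lie in the support of $\nu_\phi$, with $|\varsigma'|=|z'|$, $|\varsigma''|=|z''|$, $$|Q_\phi(z'z'',\varsigma'\varsigma'')|\le|Q_\phi(z',\varsigma')|+|Q_\phi(z'',\varsigma'')|.$$
   Context: $G=(\mathcal V,\mathcal E)$ is a finite connected simple graph, $u - v$ denotes adjacency, $\mathcal E(v)$ the set of neighbours of $v$. A list of preferences $\sigma=(\sigma(i))_{i\in\mathcal V}\in\mathcal S$ gives, for each class $i$, a linear ordering $\sigma(i)$ of $\mathcal E(i)$. Each policy $\phi$ comes with a probability $\nu_\phi$ on $\mathcal S$. The buffer is a word $w\in\mathbb W=\{w\in\mathcal V^*:|w|_i|w|_j=0 \text{ whenever } i - j\}$ of classes of waiting items in arrival order. For $v\in\mathcal V,\sigma\in\mathcal S$, $w\odot_\phi(v,\sigma)=wv$ if no letter of $w$ is adjacent to $v$; otherwise one letter of $w$ adjacent to $v$, chosen by $\phi$, is deleted. For $z=z_1\cdots z_k\in\mathcal V^*$, $\varsigma=\varsigma_1\cdots\varsigma_k\in\mathcal S^*$, $Q_\phi(z,\varsigma)=(\cdots(\emptyset\odot_\phi(z_1,\varsigma_1))\cdots)\odot_\phi(z_k,\varsigma_k)$. Policies: FCFM deletes the leftmost letter of $w$ adjacent to $v$; LCFM deletes the rightmost one. For the other policies the class $j$ of the match is chosen from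 the class detail $x=(|w|_i)_i$ and $\sigma$ among $\mathcal P(x,v)=\{j\in\mathcal E(v):x(j)>0\}$, and the leftmost letter $j$ of $w$ is deleted. Random policy: $j$ is the first element of $\mathcal P(x,v)$ in the order $\sigma(v)$, $\nu_\phi$ arbitrary; strict priority: $\nu_\phi$ a Dirac mass; uniform U: $\nu_\phi$ uniform on $\mathcal S$. ML: $\nu_\phi$ uniform on $\mathcal S$ and $j$ is the first element, in the order $\sigma(v)$, of the set of $j\in\mathcal E(v)$ maximizing $x(j)$ (among those with $x(j)>0$). *)

theory Defs
  imports Main
begin

definition simple_connected_graph :: "'a set \<Rightarrow> ('a \<Rightarrow> 'a \<Rightarrow> bool) \<Rightarrow> bool" where
  "simple_connected_graph V E \<longleftrightarrow>
     finite V \<and> V \<noteq> {} \<and>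
     (\<forall>u v. E u v \<longrightarrow> u \<in> V \<and> v \<in> V) \<and>
     (\<forall>u v. E u v \<longrightarrow> E v u) \<and>
     (\<forall>u. \<not> E u u) \<and>
     (\<forall>u\<in>V. \<forall>v\<in>V. (u, v) \<in> {(x, y). E x y}\<^sup>*)"

definition prefs :: "'a set \<Rightarrow> ('a \<Rightarrow> 'a \<Rightarrow> bool) \<Rightarrow> ('a \<Rightarrow> 'a list) set" where
  "prefs V E = {\<sigma>. (\<forall>i\<in>V. distinct (\<sigma> i) \<and> set (\<sigma> i) = {j. E i j}) \<and> (\<forall>i. i \<notin> V \<longrightarrow> \<sigma> i = [])}"

datatype policy = FCFM | LCFM | RandomPolicy | MatchLongest

fun del_first :: "('a \<Rightarrow> bool) \<Rightarrow> 'a list \<Rightarrow> 'a list" where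
  "del_first P [] = []"
| "del_first P (x # xs) = (if P x then xs else x # del_first P xs)"

definition random_choice :: "'a list \<Rightarrow> 'a \<Rightarrow> ('a \<Rightarrow> 'a list) \<Rightarrow> 'a" where
  "random_choice w v \<sigma> = hd (filter (\<lambda>j. count_list w j > 0) (\<sigma> v))"

definition ml_choice :: "'a list \<Rightarrow> 'a \<Rightarrow> ('a \<Rightarrow> 'a list) \<Rightarrow> 'a" where
  "ml_choice w v \<sigma> =
     (let P = filter (\<lambda>j. count_list w j > 0) (\<sigma> v);
          m = Max (set (map (count_list w) P))
      in hd (filter (\<lambda>j. count_list w j = m) P))"

definition step :: "('a \<Rightarrow> 'a \<Rightarrow> bool) \<Rightarrow> policy \<Rightarrow> 'a list \<Rightarrow> 'a \<Rightarrow> ('a \<Rightarrow> 'a list) \<Rightarrow> 'a list" where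
  "step E \<phi> w v \<sigma> =
     (if \<not> (\<exists>u\<in>set w. E v u) then w @ [v]
      else (case \<phi> of
              FCFM \<Rightarrow> del_first (E v) w
            | LCFM \<Rightarrow> rev (del_first (E v) (rev w))
            | RandomPolicy \<Rightarrow> remove1 (random_choice w v \<sigma>) w
            | MatchLongest \<Rightarrow> remove1 (ml_choice w v \<sigma>) w))"

definition Q :: "('a \<Rightarrow> 'a \<Rightarrow> bool) \<Rightarrow> policy \<Rightarrow> 'a list \<Rightarrow> ('a \<Rightarrow> 'a list) list \<Rightarrow> 'a list" where
  "Q E \<phi> z ss = fold (\<lambda>(v, \<sigma>) w. step E \<phi> w v \<sigma>) (zip z ss) []"

end

theory Submission
  imports Defs "HOL-Library.Multiset"
begin

section \<open>Word part (FCFM / LCFM)\<close>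

definition insw :: "'a list \<Rightarrow> 'a list \<Rightarrow> bool" where
  "insw A B \<longleftrightarrow> (\<exists>xs x ys. A = xs @ x # ys \<and> B = xs @ ys)"

lemma df_split: "\<exists>u\<in>set ys. P u \<Longrightarrow> \<exists>a c b. ys = a @ c # b \<and> del_first P ys = a @ b"
proof (induction ys)
  case Nil then show ?case by simp
next
  case (Cons y ys)
  show ?case
  proof (cases "P y")
    case True then show ?thesis by (rule_tac x="[]" in exI) auto
  next
    case False
    with Cons obtain a c b where "ys = a @ c # b" "del_first P ys = a @ b" by auto
    with False show ?thesis by (rule_tac x="y#a" in exI) auto
  qed
qed

lemma df_app1: "\<exists>u\<in>set xs. P u \<Longrightarrow> del_first P (xs @ l) = del_first P xs @ l"
  by (induction xs) auto

lemma df_app2: "\<not>(\<exists>u\<in>set xs. P u) \<Longrightarrow> del_first P (xs @ l) = xs @ del_first P l"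
  by (induction xs) auto

lemma df_none: "\<not>(\<exists>u\<in>set xs. P u) \<Longrightarrow> del_first P xs = xs"
  by (induction xs) auto

lemma insw_core:
  assumes "insw A B" "\<exists>u\<in>set B. P u"
  shows "insw (del_first P A) (del_first P B)"
proof -
  obtain xs x ys where A: "A = xs @ x # ys" and B: "B = xs @ ys" using assms(1) unfolding insw_def by blast
  show ?thesis
  proof (cases "\<exists>u\<in>set xs. P u")
    case True
    have "del_first P A = del_first P xs @ x # ys" "del_first P B = del_first P xs @ ys"
      unfolding A B using df_app1[OF True] by auto
    then show ?thesis unfolding insw_def by blast
  next
    case False
    note d = df_app2[OF False]
    show ?thesis
    proof (cases "P x")
      case True
      from False assms(2) B have "\<exists>u\<in>set ys. P u" by auto
      from df_split[OF this] obtain a c b where "ys = a @ c # b" "del_first P ys = a @ b" by blast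
      then have "del_first P A = (xs @ a) @ c # b" "del_first P B = (xs @ a) @ b"
        unfolding A B using d True by auto
      then show ?thesis unfolding insw_def by blast
    next
      case F: False
      have "del_first P A = xs @ x # del_first P ys" "del_first P B = xs @ del_first P ys"
        unfolding A B using d F by auto
      then show ?thesis unfolding insw_def by blast
    qed
  qed
qed

lemma insw_core2:
  assumes "insw A B" "\<not>(\<exists>u\<in>set B. P u)" "\<exists>u\<in>set A. P u"
  shows "del_first P A = B"
proof -
  obtain xs x ys where A: "A = xs @ x # ys" and B: "B = xs @ ys" using assms(1) unfolding insw_def by blast
  from assms B have n1: "\<not>(\<exists>u\<in>set xs. P u)" and n2: "\<not>(\<exists>u\<in>set ys. P u)" by auto
  with assms(3) A have "P x" by auto
  then show ?thesis unfolding A B df_app2[OF n1] by simp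
qed

lemma insw_rev: "insw A B \<Longrightarrow> insw (rev A) (rev B)"
proof -
  assume "insw A B"
  then obtain xs x ys where "A = xs @ x # ys" "B = xs @ ys" unfolding insw_def by blast
  then have "rev A = rev ys @ x # rev xs" "rev B = rev ys @ rev xs" by auto
  then show ?thesis unfolding insw_def by blast
qed

lemma insw_snoc: "insw A B \<Longrightarrow> insw (A @ [v]) (B @ [v])"
proof -
  assume "insw A B"
  then obtain xs x ys where "A = xs @ x # ys" "B = xs @ ys" unfolding insw_def by blast
  then have "A @ [v] = xs @ x # (ys @ [v])" "B @ [v] = xs @ (ys @ [v])" by auto
  then show ?thesis unfolding insw_def by blast
qed

lemma insw_set: "insw A B \<Longrightarrow> set B \<subseteq> set A"
  unfolding insw_def by auto

lemma insw_app: "insw (B @ [v]) B"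
  unfolding insw_def by (rule_tac x=B in exI) auto

definition simw :: "'a list \<Rightarrow> 'a list \<Rightarrow> bool" where
  "simw A B \<longleftrightarrow> A = B \<or> insw A B \<or> insw B A"

lemma step_insw:
  assumes "insw A B" "\<phi> = FCFM \<or> \<phi> = LCFM"
  shows "simw (step E \<phi> A v \<sigma>) (step E \<phi> B v \<sigma>)"
proof -
  have sub: "set B \<subseteq> set A" using insw_set[OF assms(1)] .
  show ?thesis
  proof (cases "\<exists>u\<in>set B. E v u")
    case True
    then have TA: "\<exists>u\<in>set A. E v u" using sub by auto
    show ?thesis
    proof (cases "\<phi> = FCFM")
      case True
      then show ?thesis using TA \<open>\<exists>u\<in>set B. E v u\<close> insw_core[OF assms(1), of "E v"]
        by (simp add: step_def simw_def)
    next
      case False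
      then have L: "\<phi> = LCFM" using assms(2) by simp
      have "insw (del_first (E v) (rev A)) (del_first (E v) (rev B))"
        using insw_core[OF insw_rev[OF assms(1)], of "E v"] True by simp
      then have "insw (rev (del_first (E v) (rev A))) (rev (del_first (E v) (rev B)))"
        using insw_rev by fastforce
      then show ?thesis using L TA True by (simp add: step_def simw_def)
    qed
  next
    case False
    show ?thesis
    proof (cases "\<exists>u\<in>set A. E v u")
      case True
      have "del_first (E v) A = B" using insw_core2[OF assms(1)] False True by blast
      moreover have "del_first (E v) (rev A) = rev B"
        using insw_core2[OF insw_rev[OF assms(1)], of "E v"] False True by simp
      ultimately show ?thesis using False True assms(2) insw_app[of B v]
        by (auto simp add: step_def simw_def)
    next
      case F2: False
      then show ?thesis using False insw_snoc[OF assms(1)]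
        by (simp add: step_def simw_def)
    qed
  qed
qed

lemma simw_sym: "simw A B \<Longrightarrow> simw B A"
  unfolding simw_def by blast

lemma step_simw:
  assumes "simw A B" "\<phi> = FCFM \<or> \<phi> = LCFM"
  shows "simw (step E \<phi> A v \<sigma>) (step E \<phi> B v \<sigma>)"
proof -
  from assms(1) consider "A = B" | "insw A B" | "insw B A" unfolding simw_def by blast
  then show ?thesis
  proof cases
    case 1 then show ?thesis by (simp add: simw_def)
  next
    case 2 then show ?thesis by (rule step_insw[OF _ assms(2)])
  next
    case 3 then have "simw (step E \<phi> B v \<sigma>) (step E \<phi> A v \<sigma>)"
      by (rule step_insw[OF _ assms(2)])
    then show ?thesis by (rule simw_sym)
  qed
qed

section \<open>Multiset part (Random / ML)\<close>

definition simm :: "'a list \<Rightarrow> 'a list \<Rightarrow> bool" where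
  "simm A B \<longleftrightarrow> mset A = mset B \<or> (\<exists>x. mset A = add_mset x (mset B)) \<or> (\<exists>x. mset B = add_mset x (mset A))"

lemma simm_abstract:
  fixes c :: "'a list \<Rightarrow> 'a"
  assumes c_eq: "\<And>A B. mset A = mset B \<Longrightarrow> c A = c B"
    and c_ins: "\<And>A B x. (\<exists>u\<in>set B. E v u) \<Longrightarrow> mset A = add_mset x (mset B) \<Longrightarrow> c A = c B \<or> c A = x"
    and c_ok: "\<And>w. (\<exists>u\<in>set w. E v u) \<Longrightarrow> c w \<in> set w \<and> E v (c w)"
    and st: "\<And>w. f w = (if \<not>(\<exists>u\<in>set w. E v u) then w @ [v] else remove1 (c w) w)"
    and sm: "simm A B"
  shows "simm (f A) (f B)"
proof -
  have ins: "simm (f A) (f B)" if h: "mset A = add_mset x (mset B)" for A B x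
  proof -
    have sA: "set A = insert x (set B)" using h by (metis set_mset_add_mset_insert set_mset_mset)
    show ?thesis
    proof (cases "\<exists>u\<in>set B. E v u")
      case True
      then have TA: "\<exists>u\<in>set A. E v u" using sA by auto
      have cB: "c B \<in> set B" using c_ok True by blast
      from c_ins[OF True h] show ?thesis
      proof
        assume e: "c A = c B"
        have "mset (f A) = add_mset x (mset (f B))"
          using True TA e h cB by (simp add: st)
        then show ?thesis unfolding simm_def by blast
      next
        assume e: "c A = x"
        have "mset (f B) = mset B - {#c B#}" "mset (f A) = mset B"
          using True TA e h by (simp_all add: st)
        then have "mset (f A) = add_mset (c B) (mset (f B))" using cB by simp
        then show ?thesis unfolding simm_def by blast
      qed
    next
      case False
      show ?thesis
      proof (cases "\<exists>u\<in>set A. E v u")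
        case True
        have "c A \<in> set A" "E v (c A)" using c_ok True by auto
        then have "c A = x" using False sA by auto
        then have "mset (f A) = mset B" "mset (f B) = add_mset v (mset B)"
          using True False h by (simp_all add: st)
        then show ?thesis unfolding simm_def by auto
      next
        case F2: False
        then have "mset (f A) = add_mset x (mset (f B))" using False h by (simp add: st)
        then show ?thesis unfolding simm_def by blast
      qed
    qed
  qed
  have eq: "simm (f A) (f B)" if h: "mset A = mset B" for A B
  proof -
    have "set A = set B" using h by (metis set_mset_mset)
    then have "mset (f A) = mset (f B)" using h c_eq[OF h] by (simp add: st)
    then show ?thesis unfolding simm_def by blast
  qed
  from sm show ?thesis unfolding simm_def
    using ins eq unfolding simm_def by (metis)
qed

lemma hd_filter_lemma:
  assumes "\<forall>j\<in>set L. pB j \<longrightarrow> pA j" "\<forall>j\<in>set L. pA j \<longrightarrow> pB j \<or> j = x" "filter pB L \<noteq> []"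
  shows "hd (filter pA L) = hd (filter pB L) \<or> hd (filter pA L) = x"
  using assms by (induction L) auto

lemma count_ins:
  "mset A = add_mset x (mset B) \<Longrightarrow> count_list A j = count_list B j + (if j = x then 1 else 0)"
  by (drule arg_cong[where f="\<lambda>M. count M j"]) (auto simp: count_mset)

lemma count_eq: "mset A = mset B \<Longrightarrow> count_list A = count_list B"
  by (rule ext, drule arg_cong[where f="\<lambda>M. count M j" for j]) (simp add: count_mset)

lemma cnt_pos[simp]: "0 < count_list w j \<longleftrightarrow> j \<in> set w"
  using count_list_0_iff[of w j] by auto

lemma random_ins:
  assumes "set (\<sigma> v) = {j. E v j}" "\<exists>u\<in>set B. E v u" "mset A = add_mset x (mset B)"
  shows "random_choice A v \<sigma> = random_choice B v \<sigma> \<or> random_choice A v \<sigma> = x"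
proof -
  have "filter (\<lambda>j. count_list B j > 0) (\<sigma> v) \<noteq> []"
    using assms(1,2) by (auto simp: filter_empty_conv)
  moreover have key: "\<And>j. (count_list A j > 0) = (count_list B j > 0 \<or> j = x)"
    using count_ins[OF assms(3)] by (simp del: cnt_pos)
  ultimately have "hd (filter (\<lambda>j. count_list A j > 0) (\<sigma> v)) = hd (filter (\<lambda>j. count_list B j > 0) (\<sigma> v))
     \<or> hd (filter (\<lambda>j. count_list A j > 0) (\<sigma> v)) = x"
    apply (intro hd_filter_lemma[of "\<sigma> v" "\<lambda>j. count_list B j > 0" "\<lambda>j. count_list A j > 0" x])
    using key by (simp_all del: cnt_pos)
  then show ?thesis unfolding random_choice_def .
qed

lemma random_ok:
  assumes "set (\<sigma> v) = {j. E v j}" "\<exists>u\<in>set w. E v u"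
  shows "random_choice w v \<sigma> \<in> set w \<and> E v (random_choice w v \<sigma>)"
proof -
  have ne: "filter (\<lambda>j. count_list w j > 0) (\<sigma> v) \<noteq> []"
    using assms by (auto simp: filter_empty_conv )
  then have "random_choice w v \<sigma> \<in> set (filter (\<lambda>j. count_list w j > 0) (\<sigma> v))"
    unfolding random_choice_def by (rule hd_in_set)
  then show ?thesis using assms(1) by (auto simp: )
qed

lemma ml_alt:
  assumes "\<exists>j\<in>set (\<sigma> v). count_list w j > 0"
  shows "ml_choice w v \<sigma> = hd (filter (\<lambda>j. count_list w j = Max (count_list w ` set (\<sigma> v))) (\<sigma> v))"
proof -
  define cnt where "cnt = count_list w"
  define L where "L = \<sigma> v"
  define P where "P = filter (\<lambda>j. cnt j > 0) L"
  define M where "M = Max (cnt ` set L)"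
  obtain j0 where j0: "j0 \<in> set L" "cnt j0 > 0" using assms cnt_def L_def by blast
  have fin: "finite (cnt ` set L)" by simp
  have ne: "cnt ` set L \<noteq> {}" using j0 by auto
  have "M \<in> cnt ` set L" unfolding M_def using fin ne by (rule Max_in)
  then obtain j1 where j1: "j1 \<in> set L" "cnt j1 = M" by auto
  have "cnt j0 \<le> M" unfolding M_def using fin j0 by auto
  then have Mpos: "M > 0" using j0 by simp
  have sP: "set (map cnt P) = cnt ` {j \<in> set L. cnt j > 0}" unfolding P_def by auto
  have "Max (set (map cnt P)) = M"
  proof (rule antisym)
    show "Max (set (map cnt P)) \<le> M" unfolding sP M_def
      using fin j0 by (intro Max_mono) auto
    have "M \<in> set (map cnt P)" unfolding sP using j1 Mpos by auto
    then show "M \<le> Max (set (map cnt P))" by simp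
  qed
  moreover have "filter (\<lambda>j. cnt j = M) P = filter (\<lambda>j. cnt j = M) L"
    unfolding P_def using Mpos by (auto simp: filter_filter intro: filter_cong)
  ultimately show ?thesis unfolding ml_choice_def
    by (simp add: Let_def cnt_def L_def P_def M_def)
qed

lemma ml_ok:
  assumes "set (\<sigma> v) = {j. E v j}" "\<exists>u\<in>set w. E v u"
  shows "ml_choice w v \<sigma> \<in> set w \<and> E v (ml_choice w v \<sigma>)"
proof -
  define cnt where "cnt = count_list w"
  define M where "M = Max (cnt ` set (\<sigma> v))"
  have ex: "\<exists>j\<in>set (\<sigma> v). count_list w j > 0"
    using assms by auto
  then obtain j0 where j0: "j0 \<in> set (\<sigma> v)" "cnt j0 > 0" using cnt_def by blast
  have fin: "finite (cnt ` set (\<sigma> v))" by simp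
  have "M \<in> cnt ` set (\<sigma> v)" unfolding M_def using fin j0 by (intro Max_in) auto
  then have ne: "filter (\<lambda>j. cnt j = M) (\<sigma> v) \<noteq> []" by (auto simp: filter_empty_conv)
  have "cnt j0 \<le> M" unfolding M_def using fin j0 by auto
  then have Mpos: "M > 0" using j0 by simp
  have "ml_choice w v \<sigma> \<in> set (filter (\<lambda>j. cnt j = M) (\<sigma> v))"
    unfolding ml_alt[of \<sigma> v w, OF ex] cnt_def[symmetric] M_def[symmetric] using ne by (rule hd_in_set)
  then show ?thesis using assms(1) Mpos by (auto simp: cnt_def)
qed

lemma ml_ins:
  assumes s: "set (\<sigma> v) = {j. E v j}" and hB: "\<exists>u\<in>set B. E v u" and h: "mset A = add_mset x (mset B)"
  shows "ml_choice A v \<sigma> = ml_choice B v \<sigma> \<or> ml_choice A v \<sigma> = x"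
proof -
  define L where "L = \<sigma> v"
  define cB where "cB = count_list B"
  define cA where "cA = count_list A"
  have cA: "\<And>j. cA j = cB j + (if j = x then 1 else 0)" using count_ins[OF h] cA_def cB_def by simp
  have exB: "\<exists>j\<in>set L. cB j > 0" using s hB by (auto simp: L_def cB_def)
  then obtain j0 where j0: "j0 \<in> set L" "cB j0 > 0" by blast
  have exA: "\<exists>j\<in>set L. cA j > 0" using j0 cA by (metis add_gr_0)
  define MB where "MB = Max (cB ` set L)"
  define MA where "MA = Max (cA ` set L)"
  have finB: "finite (cB ` set L)" and finA: "finite (cA ` set L)" by simp_all
  have neB: "cB ` set L \<noteq> {}" and neA: "cA ` set L \<noteq> {}" using j0 by auto
  have leB: "\<And>j. j \<in> set L \<Longrightarrow> cB j \<le> MB" unfolding MB_def using finB by auto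
  have leA: "\<And>j. j \<in> set L \<Longrightarrow> cA j \<le> MA" unfolding MA_def using finA by auto
  have "MB \<in> cB ` set L" unfolding MB_def using finB neB by (rule Max_in)
  then obtain jb where jb: "jb \<in> set L" "cB jb = MB" by auto
  have "MA \<in> cA ` set L" unfolding MA_def using finA neA by (rule Max_in)
  then obtain ja where ja: "ja \<in> set L" "cA ja = MA" by auto
  have MAge: "MB \<le> MA" using leA[OF jb(1)] jb cA by (metis le_add1 order_trans)
  have eqA: "ml_choice A v \<sigma> = hd (filter (\<lambda>j. cA j = MA) L)"
    using ml_alt[of \<sigma> v A] exA by (simp add: cA_def MA_def L_def)
  have eqB: "ml_choice B v \<sigma> = hd (filter (\<lambda>j. cB j = MB) L)"
    using ml_alt[of \<sigma> v B] exB by (simp add: cB_def MB_def L_def)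
  show ?thesis
  proof (cases "x \<in> set L \<and> cB x = MB")
    case True
    then have "cA x = MB + 1" using cA by simp
    have m1: "MB + 1 \<le> MA" using leA[of x] True \<open>cA x = MB + 1\<close> by simp
    have "cA ja \<le> MB + 1" using cA[of ja] leB[OF ja(1)] by (cases "ja = x") auto
    then have "MA = MB + 1" using m1 ja(2) by simp
    have onlyx: "j = x" if "j \<in> set L" "cA j = MA" for j
    proof (rule ccontr)
      assume "j \<noteq> x"
      then have "cA j \<le> MB" using leB[OF that(1)] cA[of j] by simp
      then show False using \<open>MA = MB + 1\<close> that(2) by simp
    qed
    have "filter (\<lambda>j. cA j = MA) L \<noteq> []" using True \<open>cA x = MB + 1\<close> \<open>MA = MB + 1\<close>
      by (auto simp: filter_empty_conv)
    then have "hd (filter (\<lambda>j. cA j = MA) L) \<in> set (filter (\<lambda>j. cA j = MA) L)" by (rule hd_in_set)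
    then show ?thesis using eqA onlyx by auto
  next
    case False
    have "\<And>j. j \<in> set L \<Longrightarrow> cA j \<le> MB"
    proof -
      fix j assume j: "j \<in> set L"
      show "cA j \<le> MB"
      proof (cases "j = x")
        case True
        then have "cB x < MB" using False j leB[of j] by auto
        then show ?thesis using cA True by simp
      next
        case False then show ?thesis using cA leB j by simp
      qed
    qed
    then have "MA \<le> MB" using ja by auto
    then have MAB: "MA = MB" using MAge by simp
    have f3: "filter (\<lambda>j. cB j = MB) L \<noteq> []" using jb by (auto simp: filter_empty_conv)
    have f1: "\<forall>j\<in>set L. cB j = MB \<longrightarrow> cA j = MA"
    proof (intro ballI impI)
      fix j assume j: "j \<in> set L" "cB j = MB"
      then have "j \<noteq> x" using False by auto
      then show "cA j = MA" using cA[of j] j MAB by simp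
    qed
    have f2: "\<forall>j\<in>set L. cA j = MA \<longrightarrow> cB j = MB \<or> j = x"
    proof (intro ballI impI)
      fix j assume j: "j \<in> set L" "cA j = MA"
      show "cB j = MB \<or> j = x"
      proof (cases "j = x")
        case False then show ?thesis using cA[of j] j MAB by simp
      qed simp
    qed
    show ?thesis unfolding eqA eqB
      by (rule hd_filter_lemma[of L "\<lambda>j. cB j = MB" "\<lambda>j. cA j = MA" x, OF f1 f2 f3])
  qed
qed

definition Sim :: "policy \<Rightarrow> 'a list \<Rightarrow> 'a list \<Rightarrow> bool" where
  "Sim \<phi> A B = (if \<phi> = FCFM \<or> \<phi> = LCFM then simw A B else simm A B)"

lemma sim_step:
  assumes "Sim \<phi> A B" "set (\<sigma> v) = {j. E v j}"
  shows "Sim \<phi> (step E \<phi> A v \<sigma>) (step E \<phi> B v \<sigma>)"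
proof (cases "\<phi> = FCFM \<or> \<phi> = LCFM")
  case True
  then have "simw A B" using assms(1) unfolding Sim_def by simp
  then have "simw (step E \<phi> A v \<sigma>) (step E \<phi> B v \<sigma>)" using True by (rule step_simw)
  then show ?thesis using True unfolding Sim_def by simp
next
  case False
  then have sm: "simm A B" using assms unfolding Sim_def by simp
  have "simm (step E \<phi> A v \<sigma>) (step E \<phi> B v \<sigma>)"
  proof (cases \<phi>)
    case RandomPolicy
    show ?thesis
    proof (rule simm_abstract[where c="\<lambda>w. random_choice w v \<sigma>" and E=E and v=v and f="\<lambda>w. step E \<phi> w v \<sigma>", OF _ _ _ _ sm])
      show "random_choice A' v \<sigma> = random_choice B' v \<sigma>" if "mset A' = mset B'" for A' B'
        unfolding random_choice_def count_eq[OF that] ..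
      show "random_choice A' v \<sigma> = random_choice B' v \<sigma> \<or> random_choice A' v \<sigma> = x"
        if "\<exists>u\<in>set B'. E v u" "mset A' = add_mset x (mset B')" for A' B' x
        by (rule random_ins[of \<sigma> v E B' A' x, OF assms(2) that])
      show "random_choice w v \<sigma> \<in> set w \<and> E v (random_choice w v \<sigma>)" if "\<exists>u\<in>set w. E v u" for w
        by (rule random_ok[of \<sigma> v E w, OF assms(2) that])
      show "step E \<phi> w v \<sigma> = (if \<not> (\<exists>u\<in>set w. E v u) then w @ [v] else remove1 (random_choice w v \<sigma>) w)" for w
        using RandomPolicy by (simp add: step_def)
    qed
  next
    case MatchLongest
    show ?thesis
    proof (rule simm_abstract[where c="\<lambda>w. ml_choice w v \<sigma>" and E=E and v=v and f="\<lambda>w. step E \<phi> w v \<sigma>", OF _ _ _ _ sm])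
      show "ml_choice A' v \<sigma> = ml_choice B' v \<sigma>" if "mset A' = mset B'" for A' B'
        unfolding ml_choice_def count_eq[OF that] ..
      show "ml_choice A' v \<sigma> = ml_choice B' v \<sigma> \<or> ml_choice A' v \<sigma> = x"
        if "\<exists>u\<in>set B'. E v u" "mset A' = add_mset x (mset B')" for A' B' x
        by (rule ml_ins[of \<sigma> v E B' A' x, OF assms(2) that])
      show "ml_choice w v \<sigma> \<in> set w \<and> E v (ml_choice w v \<sigma>)" if "\<exists>u\<in>set w. E v u" for w
        by (rule ml_ok[of \<sigma> v E w, OF assms(2) that])
      show "step E \<phi> w v \<sigma> = (if \<not> (\<exists>u\<in>set w. E v u) then w @ [v] else remove1 (ml_choice w v \<sigma>) w)" for w
        using MatchLongest by (simp add: step_def)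
    qed
  qed (use False in simp_all)
  then show ?thesis using False unfolding Sim_def by simp
qed

lemma sim_len: "Sim \<phi> A B \<Longrightarrow> length A \<le> length B + 1"
proof -
  have w: "length A \<le> length B + 1" if "simw A B"
  proof -
    from that consider "A = B" | "insw A B" | "insw B A" unfolding simw_def by blast
    then show ?thesis
    proof cases
      case 2 then obtain xs x ys where "A = xs @ x # ys" "B = xs @ ys" unfolding insw_def by blast
      then show ?thesis by simp
    next
      case 3 then obtain xs x ys where "B = xs @ x # ys" "A = xs @ ys" unfolding insw_def by blast
      then show ?thesis by simp
    qed simp
  qed
  have m: "length A \<le> length B + 1" if "simm A B"
  proof -
    from that consider "mset A = mset B" | x where "mset A = add_mset x (mset B)"
      | x where "mset B = add_mset x (mset A)" unfolding simm_def by blast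
    then show ?thesis
    proof cases
      case 1 then have "size (mset A) = size (mset B)" by simp
      then show ?thesis by simp
    next
      case (2 x) then have "size (mset A) = size (mset B) + 1" by simp
      then show ?thesis by simp
    next
      case (3 x) then have "size (mset B) = size (mset A) + 1" by simp
      then show ?thesis by simp
    qed
  qed
  assume "Sim \<phi> A B"
  then show ?thesis using w m unfolding Sim_def by (simp split: if_splits)
qed

lemma sim_cons: "Sim \<phi> (x # B) B"
proof -
  have "insw (x # B) B" unfolding insw_def
    by (rule exI[where x="[]"], rule exI[where x=x], rule exI[where x=B]) simp
  then have "simw (x # B) B" unfolding simw_def by blast
  moreover have "simm (x # B) B" unfolding simm_def by simp
  ultimately show ?thesis unfolding Sim_def by simp
qed

definition run :: "('a \<Rightarrow> 'a \<Rightarrow> bool) \<Rightarrow> policy \<Rightarrow> 'a list \<Rightarrow> ('a \<times> ('a \<Rightarrow> 'a list)) list \<Rightarrow> 'a list" where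
  "run E \<phi> w zs = fold (\<lambda>(v, \<sigma>) w. step E \<phi> w v \<sigma>) zs w"

lemma sim_run:
  assumes "\<forall>(v,\<sigma>)\<in>set zs. set (\<sigma> v) = {j. E v j}" "Sim \<phi> A B"
  shows "Sim \<phi> (run E \<phi> A zs) (run E \<phi> B zs)"
  using assms
proof (induction zs arbitrary: A B)
  case Nil then show ?case by (simp add: run_def)
next
  case (Cons p zs)
  obtain v \<sigma> where p: "p = (v, \<sigma>)" by fastforce
  from Cons.prems(1) p have "set (\<sigma> v) = {j. E v j}" by auto
  then have "Sim \<phi> (step E \<phi> A v \<sigma>) (step E \<phi> B v \<sigma>)"
    by (rule sim_step[OF Cons.prems(2)])
  then show ?case using Cons.IH[of "step E \<phi> A v \<sigma>" "step E \<phi> B v \<sigma>"] Cons.prems p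
    by (simp add: run_def)
qed

lemma run_len:
  assumes "\<forall>(v,\<sigma>)\<in>set zs. set (\<sigma> v) = {j. E v j}"
  shows "length (run E \<phi> w zs) \<le> length w + length (run E \<phi> [] zs)"
proof (induction w)
  case Nil then show ?case by simp
next
  case (Cons x w)
  have "length (run E \<phi> (x # w) zs) \<le> length (run E \<phi> w zs) + 1"
    by (rule sim_len[OF sim_run[OF assms sim_cons]])
  then show ?case using Cons by simp
qed

theorem mainTheorem6:
  fixes V :: "'a set" and E :: "'a \<Rightarrow> 'a \<Rightarrow> bool" and \<phi> :: policy
    and z' z'' :: "'a list" and ss' ss'' :: "('a \<Rightarrow> 'a list) list"
  assumes "simple_connected_graph V E"
    and "set z' \<subseteq> V" and "set z'' \<subseteq> V"
    and "set ss' \<subseteq> prefs V E" and "set ss'' \<subseteq> prefs V E"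
    and "length ss' = length z'" and "length ss'' = length z''"
  shows "length (Q E \<phi> (z' @ z'') (ss' @ ss''))
           \<le> length (Q E \<phi> z' ss') + length (Q E \<phi> z'' ss'')"
proof -
  have eq1: "Q E \<phi> (z' @ z'') (ss' @ ss'') = run E \<phi> (Q E \<phi> z' ss') (zip z'' ss'')"
    using assms(6) by (simp add: Q_def run_def)
  have eq2: "Q E \<phi> z'' ss'' = run E \<phi> [] (zip z'' ss'')" by (simp add: Q_def run_def)
  have "\<forall>(v,\<sigma>)\<in>set (zip z'' ss''). set (\<sigma> v) = {j. E v j}"
  proof (clarify)
    fix v \<sigma> assume "(v, \<sigma>) \<in> set (zip z'' ss'')"
    then have "v \<in> V" "\<sigma> \<in> prefs V E" using assms(3,5)
      by (auto dest: set_zip_leftD set_zip_rightD)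
    then show "set (\<sigma> v) = {j. E v j}" unfolding prefs_def by auto
  qed
  from run_len[OF this] show ?thesis unfolding eq1 eq2 .
qed

end
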